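(* In the algorithm DOBGA described in the context, let $\mathbf{r}_i(t)=\mathbf{x}_i(t)-\mathbf{y}_i(t)$. If $\|\widetilde{\nabla}f_{t,i}(\mathbf{x})\|\le G_{1}$ for all $i\in[N]$, $t\in[T]$, $\mathbf{x}\in\mathcal{X}$, then $\|\mathbf{r}_{i}(t+1)\|\le\eta_{t}(1-1/e)G_{1}$ for all $t\in[T]$ and $i\in[N]$.
   Context: $\mathcal{X}=\prod_{l=1}^n[0,a_l]$, $\mathcal{K}\subseteq\mathcal{X}$ a bounded convex set. $N$ nodes on a connected undirected graph with neighbor sets $\mathcal{N}_i$; weight matrix $\mathbf{A}=[a_{ij}]\in\mathbb{R}_+^{N\times N}$ symmetric, doubly stochastic, $a_{ij}=0$ if $j\notin\mathcal{N}_i\cup\{i\}$. For each $t,i$, $\widetilde{\nabla}f_{t,i}$ is a stochastic gradient oracle of a function $f_{t,i}:\mathcal{X}\to\mathbb{R}_+$. Algorithm DOBGA with step sizes $\eta_t>0$: initialize $\mathbf{x}_i(1)\in\mathcal{K}$; for $t=1,\dots,T$ and each $i$, draw $z_i(t)\in[0,1]$ with $\Pr(\mathbf{Z}\le z)=\frac{e^{z-1}-1/e}{1-1/e}$, set $\mathbf{y}_i(t+1)=\sum_{j\in\mathcal{N}_i\cup\{i\}}a_{ij}\mathbf{x}_j(t)+\eta_t(1-1/e)\widetilde{\nabla}f_{t,i}(z_i(t)\mathbf{x}_i(t))$ and $\mathbf{x}_i(t+1)=\arg\min_{\mathbf{z}\in\mathcal{K}}\|\mathbf{z}-\mathbf{y}_i(t+1)\|$.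 *)

theory Defs
  imports "HOL-Analysis.Analysis"
begin

definition box_set :: "real^'n \<Rightarrow> (real^'n) set" where
  "box_set a = {x. \<forall>l. 0 \<le> x$l \<and> x$l \<le> a$l}"

definition connected_undirected_graph :: "nat \<Rightarrow> (nat \<Rightarrow> nat set) \<Rightarrow> bool" where
  "connected_undirected_graph N Nb \<longleftrightarrow>
     (\<forall>i\<in>{1..N}. Nb i \<subseteq> {1..N} \<and> i \<notin> Nb i) \<and>
     (\<forall>i\<in>{1..N}. \<forall>j\<in>{1..N}. j \<in> Nb i \<longleftrightarrow> i \<in> Nb j) \<and>
     (\<forall>i\<in>{1..N}. \<forall>j\<in>{1..N}. (i, j) \<in> {(u, v). v \<in> Nb u}\<^sup>*)"

definition admissible_weights :: "nat \<Rightarrow> (nat \<Rightarrow> nat set) \<Rightarrow> (nat \<Rightarrow> nat \<Rightarrow> real) \<Rightarrow> bool" where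
  "admissible_weights N Nb A \<longleftrightarrow>
     (\<forall>i\<in>{1..N}. \<forall>j\<in>{1..N}. A i j \<ge> 0 \<and> A i j = A j i) \<and>
     (\<forall>i\<in>{1..N}. (\<Sum>j=1..N. A i j) = 1) \<and>
     (\<forall>j\<in>{1..N}. (\<Sum>i=1..N. A i j) = 1) \<and>
     (\<forall>i\<in>{1..N}. \<forall>j\<in>{1..N}. j \<notin> Nb i \<union> {i} \<longrightarrow> A i j = 0)"

end

theory Submission
  imports Defs
begin

theorem lemma15:
  fixes a :: "real^'n" and K :: "(real^'n) set"
    and N T :: nat and Nb :: "nat \<Rightarrow> nat set" and A :: "nat \<Rightarrow> nat \<Rightarrow> real"
    and g :: "nat \<Rightarrow> nat \<Rightarrow> real^'n \<Rightarrow> real^'n"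
    and \<eta> :: "nat \<Rightarrow> real" and G1 :: real
    and x y :: "nat \<Rightarrow> nat \<Rightarrow> real^'n" and z :: "nat \<Rightarrow> nat \<Rightarrow> real"
  assumes a_nonneg: "\<forall>l. a$l \<ge> 0"
    and K_sub: "K \<subseteq> box_set a" and K_convex: "convex K" and K_bounded: "bounded K"
    and graph: "connected_undirected_graph N Nb"
    and weights: "admissible_weights N Nb A"
    and eta_pos: "\<forall>t. \<eta> t > 0"
    and init: "\<forall>i\<in>{1..N}. x i 1 \<in> K"
    and z_range: "\<forall>t\<in>{1..T}. \<forall>i\<in>{1..N}. z i t \<in> {0..1}"
    and y_def: "\<forall>t\<in>{1..T}. \<forall>i\<in>{1..N}.
        y i (t + 1) = (\<Sum>j\<in>Nb i \<union> {i}. A i j *\<^sub>R x j t)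
                      + (\<eta> t * (1 - 1 / exp 1)) *\<^sub>R g t i (z i t *\<^sub>R x i t)"
    and x_proj: "\<forall>t\<in>{1..T}. \<forall>i\<in>{1..N}.
        is_arg_min (\<lambda>w. norm (w - y i (t + 1))) (\<lambda>w. w \<in> K) (x i (t + 1))"
    and grad_bound: "\<forall>t\<in>{1..T}. \<forall>i\<in>{1..N}. \<forall>v\<in>box_set a. norm (g t i v) \<le> G1"
  shows "\<forall>t\<in>{1..T}. \<forall>i\<in>{1..N}. norm (x i (t + 1) - y i (t + 1)) \<le> \<eta> t * (1 - 1 / exp 1) * G1"
proof (intro ballI)
  fix t i assume t: "t \<in> {1..T}" and i: "i \<in> {1..N}"
  have Nbsub: "\<And>k. k \<in> {1..N} \<Longrightarrow> Nb k \<subseteq> {1..N}"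
    using graph unfolding connected_undirected_graph_def by blast
  have xK: "\<And>j. j \<in> {1..N} \<Longrightarrow> x j t \<in> K"
  proof -
    fix j assume j: "j \<in> {1..N}"
    show "x j t \<in> K"
    proof (cases "t = 1")
      case True then show ?thesis using init j by simp
    next
      case False
      then have "t - 1 \<in> {1..T}" "t - 1 + 1 = t" using t by auto
      then show ?thesis using x_proj j unfolding is_arg_min_def by metis
    qed
  qed
  define S where "S = Nb i \<union> {i}"
  have S_sub: "S \<subseteq> {1..N}" using Nbsub[OF i] i S_def by auto
  have finS: "finite S" using S_sub finite_subset by blast
  have "(\<Sum>j=1..N. A i j) = (\<Sum>j\<in>S. A i j)"
  proof (rule sum.mono_neutral_right)
    show "\<forall>j\<in>{1..N} - S. A i j = 0"
    proof
      fix j assume "j \<in> {1..N} - S"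
      then have "j \<in> {1..N}" "j \<notin> Nb i \<union> {i}" using S_def by auto
      then show "A i j = 0" using weights i unfolding admissible_weights_def by blast
    qed
  qed (use S_sub in auto)
  then have sum1: "(\<Sum>j\<in>S. A i j) = 1" using weights i unfolding admissible_weights_def by auto
  have sK: "(\<Sum>j\<in>S. A i j *\<^sub>R x j t) \<in> K"
    apply (rule convex_sum[OF finS K_convex sum1])
    using weights i S_sub xK unfolding admissible_weights_def by auto
  let ?v = "z i t *\<^sub>R x i t"
  have vbox: "?v \<in> box_set a"
  proof -
    have xb: "x i t \<in> box_set a" using xK[OF i] K_sub by auto
    have z01: "0 \<le> z i t" "z i t \<le> 1" using z_range t i by auto
    show ?thesis unfolding box_set_def
    proof (intro CollectI allI conjI)
      fix l
      have "0 \<le> x i t $ l" "x i t $ l \<le> a $ l" using xb unfolding box_set_def by auto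
      then show "0 \<le> ?v $ l" "?v $ l \<le> a $ l" using z01
        by (auto intro: mult_nonneg_nonneg) (metis mult_left_le_one_le order_trans)
    qed
  qed
  have c: "0 \<le> \<eta> t * (1 - 1 / exp 1)"
    using eta_pos by (simp add: less_imp_le)
  have yeq: "y i (t + 1) = (\<Sum>j\<in>S. A i j *\<^sub>R x j t) + (\<eta> t * (1 - 1 / exp 1)) *\<^sub>R g t i ?v"
    using y_def t i S_def by auto
  have "norm (x i (t + 1) - y i (t + 1)) \<le> norm ((\<Sum>j\<in>S. A i j *\<^sub>R x j t) - y i (t + 1))"
    using x_proj t i sK unfolding is_arg_min_def by (meson not_less)
  also have "\<dots> = \<eta> t * (1 - 1 / exp 1) * norm (g t i ?v)"
    unfolding yeq using c by simp
  also have "\<dots> \<le> \<eta> t * (1 - 1 / exp 1) * G1"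
    using grad_bound t i vbox c by (intro mult_left_mono) auto
  finally show "norm (x i (t + 1) - y i (t + 1)) \<le> \<eta> t * (1 - 1 / exp 1) * G1" .
qed

end
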